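(* Let $\boldsymbol X=A\times_{\max}\boldsymbol Z$ be a recursive max-linear model on a DAG $\mathcal D=(V,E)$ satisfying Assumptions A, and fix any $a>1$. A node $j\in V$ is a source node (i.e. $\mathrm{pa}(j)=\emptyset$) if and only if $$\sigma^2_{M_{i,aj}}-\sigma^2_{M_{ij}}=(a^2-1)\sigma_i^2=a^2-1\quad\text{for all } i\in V\setminus\{j\}.$$ Moreover, if $j$ is not a source node, then $\sigma^2_{M_{i,aj}}-\sigma^2_{M_{ij}}\le a^2-1$ for all $i\neq j$, with strict inequality whenever $i\in\mathrm{an}(j)$.
   Context: Let $\mathcal D=(V,E)$ be a directed acyclic graph with $V=\{1,\dots,d\}$; $\mathrm{pa}(i)$, $\mathrm{an}(i)$, $\mathrm{de}(i)$ denote parents, ancestors (nodes with a directed path to $i$) and descendants of $i$, $\mathrm{An}(i)=\mathrm{an}(i)\cup\{i\}$; $\vee$ denotes maximum. A recursive max-linear model (RMLM) on $\mathcal D$ is the unique solution of $X_i=\bigvee_{k\in\mathrm{pa}(i)}c_{ik}X_k\vee c_{ii}Z_i$, $i\in V$, with edge weights $c_{ik}>0$ ($k\in \mathrm{pa}(i)$), $c_{ii}>0$; it equals $X_i=(A\times_{\max}\boldsymbol Z)_i=\bigvee_{j\in V}a_{ij}Z_j$ where $a_{ii}=c_{ii}$, $a_{ij}$ for $j\in\mathrm{an}(i)$ is the maximum over all directed paths $j=\ell_0\to\ell_1\to\dots\to\ell_m=i$ of $c_{jj}c_{\ell_1\ell_0}\cdots c_{\ell_m\ell_{m-1}}$,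 and $a_{ij}=0$ for $j\notin\mathrm{An}(i)$. Assumptions A: (A1) $Z_1,\dots,Z_d$ are independent, nonnegative, atom-free, with $n\,\mathbb P(n^{-1/2}Z_i>z)\to z^{-2}$ as $n\to\infty$ for all $z>0$; (A2) the norm is the Euclidean norm $\|\cdot\|$; (A3) $A$ is standardised, i.e. each row is divided by its Euclidean norm so that $\sum_{j\in V}a_{ij}^2=1$ for all $i$ (the model is taken as $\boldsymbol X=A\times_{\max}\boldsymbol Z$ with this standardised $A$). Under these assumptions it is known that $a_{ij}>0$ iff $j\in\mathrm{An}(i)$, and $a_{jj}>a_{ij}$ for all $i\neq j$. Angular measure: with columns $\boldsymbol a_k$ of $A$, $\boldsymbol X$ has angular measure $H_{\boldsymbol X}=\sum_{k\in V}\|\boldsymbol a_k\|^2\delta_{\boldsymbol a_k/\|\boldsymbol a_k\|}$ on $\Theta^{d-1}_+=\{\boldsymbol\omega\in[0,\infty)^d:\|\boldsymbol\omega\|=1\}$. For weights $b_1,\dots,b_d\ge0$, the squared scaling of the max-projection $Y=\bigvee_k b_kX_k$ is $\sigma_Y^2=\int_{\Theta^{d-1}_+}\bigvee_k b_k^2\omega_k^2\,dH_{\boldsymbol X}(\boldsymbol\omega)$; $\sigma_i^2:=\sigma^2_{X_i}$. Notation: $M_{i,aj}=X_i\vee aX_j$, $M_{ij}=X_i\vee X_j$. *)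

theory Defs
  imports Complex_Main
begin

text \<open>DAG on a finite node type 'v; an edge (k, i) \<in> E means k \<rightarrow> i.\<close>

definition pa :: "('v \<times> 'v) set \<Rightarrow> 'v \<Rightarrow> 'v set" where
  "pa E i = {k. (k, i) \<in> E}"

definition an :: "('v \<times> 'v) set \<Rightarrow> 'v \<Rightarrow> 'v set" where
  "an E i = {j. (j, i) \<in> E\<^sup>+}"

definition is_path :: "('v \<times> 'v) set \<Rightarrow> 'v list \<Rightarrow> 'v \<Rightarrow> 'v \<Rightarrow> bool" where
  "is_path E p j i \<longleftrightarrow> length p \<ge> 2 \<and> hd p = j \<and> last p = i \<and>
     (\<forall>e \<in> set (zip p (tl p)). e \<in> E)"

definition path_weight :: "('v \<Rightarrow> 'v \<Rightarrow> real) \<Rightarrow> 'v list \<Rightarrow> real" where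
  "path_weight c p = prod_list (map (\<lambda>(u, v). c v u) (zip p (tl p)))"

definition ml_coeff :: "('v \<times> 'v) set \<Rightarrow> ('v \<Rightarrow> 'v \<Rightarrow> real) \<Rightarrow> 'v \<Rightarrow> 'v \<Rightarrow> real" where
  "ml_coeff E c i j =
     (if i = j then c i i
      else if j \<in> an E i then Max {c j j * path_weight c p | p. is_path E p j i}
      else 0)"

text \<open>Standardised coefficient matrix (Assumption A3): rows divided by Euclidean norm.\<close>
definition std_coeff :: "('v::finite \<times> 'v) set \<Rightarrow> ('v \<Rightarrow> 'v \<Rightarrow> real) \<Rightarrow> 'v \<Rightarrow> 'v \<Rightarrow> real" where
  "std_coeff E c i j = ml_coeff E c i j / sqrt (\<Sum>l\<in>UNIV. (ml_coeff E c i l)\<^sup>2)"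

definition col_norm :: "('v::finite \<Rightarrow> 'v \<Rightarrow> real) \<Rightarrow> 'v \<Rightarrow> real" where
  "col_norm A k = sqrt (\<Sum>i\<in>UNIV. (A i k)\<^sup>2)"

text \<open>Integral of f against the angular measure H_X = \<Sum>_k ||a_k||^2 \<delta>_{a_k/||a_k||}.\<close>
definition ang_integral :: "('v::finite \<Rightarrow> 'v \<Rightarrow> real) \<Rightarrow> (('v \<Rightarrow> real) \<Rightarrow> real) \<Rightarrow> real" where
  "ang_integral A f = (\<Sum>k\<in>UNIV. (col_norm A k)\<^sup>2 * f (\<lambda>i. A i k / col_norm A k))"

text \<open>Squared scaling of the max-projection Y = \<Or>_k b_k X_k.\<close>
definition sigma2 :: "('v::finite \<Rightarrow> 'v \<Rightarrow> real) \<Rightarrow> ('v \<Rightarrow> real) \<Rightarrow> real" where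
  "sigma2 A b = ang_integral A (\<lambda>\<omega>. Max (range (\<lambda>k. (b k)\<^sup>2 * (\<omega> k)\<^sup>2)))"

text \<open>Weight vector of M_{i,aj} = X_i \<or> a X_j (i \<noteq> j); M_{ij} is the case a = 1.\<close>
definition wM :: "'v \<Rightarrow> real \<Rightarrow> 'v \<Rightarrow> 'v \<Rightarrow> real" where
  "wM i a j = (\<lambda>k. if k = i then 1 else if k = j then a else 0)"

text \<open>Weight vector of X_i.\<close>
definition wX :: "'v \<Rightarrow> 'v \<Rightarrow> real" where
  "wX i = (\<lambda>k. if k = i then 1 else 0)"

end

theory Submission
  imports Defs
begin



lemma is_path_cons:
  "is_path E (x#y#rest) u v \<longleftrightarrow> x = u \<and> (x,y) \<in> E \<and> (if rest = [] then y = v else is_path E (y#rest) y v)"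
  by (cases rest) (auto simp: is_path_def)

lemma is_path_shape: "is_path E p u v \<Longrightarrow> \<exists>y rest. p = u#y#rest"
  unfolding is_path_def by (cases p; cases "tl p") auto

lemma pw_cons: "path_weight c (x#y#rest) = c y x * path_weight c (y#rest)"
  by (simp add: path_weight_def)

lemma pw_single: "path_weight c [x] = 1"
  by (simp add: path_weight_def)

lemma path_trancl: "is_path E p u v \<Longrightarrow> (u,v) \<in> E\<^sup>+"
proof (induction p arbitrary: u)
  case Nil then show ?case by (simp add: is_path_def)
next
  case (Cons x xs)
  then obtain y rest where p: "x = u" "xs = y#rest" using is_path_shape by fastforce
  show ?case
  proof (cases "rest = []")
    case True then show ?thesis using Cons.prems p by (auto simp: is_path_cons)
  next
    case False
    then have "(u,y) \<in> E" "is_path E (y#rest) y v" using Cons.prems p by (auto simp: is_path_cons)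
    then show ?thesis using Cons.IH p by (meson trancl_into_trancl2)
  qed
qed

lemma path_mem: "is_path E p u v \<Longrightarrow> w \<in> set p \<Longrightarrow> (u,w) \<in> E\<^sup>*"
proof (induction p arbitrary: u)
  case Nil then show ?case by (simp add: is_path_def)
next
  case (Cons x xs)
  then obtain y rest where p: "x = u" "xs = y#rest" using is_path_shape by fastforce
  show ?case
  proof (cases "rest = []")
    case True then show ?thesis using Cons.prems p by (auto simp: is_path_cons)
  next
    case False
    then have e: "(u,y) \<in> E" and pp: "is_path E (y#rest) y v" using Cons.prems p by (auto simp: is_path_cons)
    show ?thesis
    proof (cases "w = u")
      case True then show ?thesis by simp
    next
      case False
      then have "w \<in> set (y#rest)" using Cons.prems p by auto
      then have "(y,w) \<in> E\<^sup>*" using Cons.IH pp p by auto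
      then show ?thesis using e by (meson converse_rtrancl_into_rtrancl)
    qed
  qed
qed

lemma path_distinct: "acyclic E \<Longrightarrow> is_path E p u v \<Longrightarrow> distinct p"
proof (induction p arbitrary: u)
  case Nil then show ?case by simp
next
  case (Cons x xs)
  then obtain y rest where p: "x = u" "xs = y#rest" using is_path_shape by fastforce
  have e: "(u,y) \<in> E" using Cons.prems p by (auto simp: is_path_cons)
  have d: "distinct (y#rest)"
  proof (cases "rest = []")
    case True then show ?thesis by simp
  next
    case False
    then have "is_path E (y#rest) y v" using Cons.prems p by (auto simp: is_path_cons)
    then show ?thesis using Cons p by auto
  qed
  have r: "\<And>w. w \<in> set (y#rest) \<Longrightarrow> (y,w) \<in> E\<^sup>*"
  proof -
    fix w assume w: "w \<in> set (y#rest)"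
    show "(y,w) \<in> E\<^sup>*"
    proof (cases "rest = []")
      case True then show ?thesis using w by simp
    next
      case False
      then have "is_path E (y#rest) y v" using Cons.prems p by (auto simp: is_path_cons)
      then show ?thesis using path_mem w by metis
    qed
  qed
  have "u \<notin> set (y#rest)"
  proof
    assume "u \<in> set (y#rest)"
    then have "(y,u) \<in> E\<^sup>*" using r by blast
    then have "(u,u) \<in> E\<^sup>+" using e by (meson rtrancl_into_trancl2)
    then show False using Cons.prems(1) by (simp add: acyclic_def)
  qed
  then show ?case using d p by simp
qed

lemma path_exists: "(u,v) \<in> E\<^sup>+ \<Longrightarrow> \<exists>p. is_path E p u v"
proof (induction rule: converse_trancl_induct)
  case (base y)
  then have "is_path E [y,v] y v" by (simp add: is_path_cons)
  then show ?case by blast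
next
  case (step y z)
  then obtain p where p: "is_path E p z v" by blast
  then obtain z' rest where "p = z#z'#rest" using is_path_shape by fastforce
  then have "is_path E (y#p) y v" using p step by (simp add: is_path_cons)
  then show ?case by blast
qed

lemma path_append: "is_path E p k i \<Longrightarrow> is_path E q i j \<Longrightarrow>
   is_path E (p @ tl q) k j \<and> path_weight c (p @ tl q) = path_weight c p * path_weight c q"
proof (induction p arbitrary: k)
  case Nil then show ?case by (simp add: is_path_def)
next
  case (Cons x xs)
  then obtain y rest where p: "x = k" "xs = y#rest" using is_path_shape by fastforce
  obtain q1 qr where q: "q = i#q1#qr" using Cons.prems is_path_shape by fastforce
  have e: "(k,y) \<in> E" using Cons.prems p by (auto simp: is_path_cons)
  show ?case
  proof (cases "rest = []")
    case True
    then have "y = i" using Cons.prems p by (auto simp: is_path_cons)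
    then show ?thesis using True p q e Cons.prems by (simp add: is_path_cons pw_cons pw_single)
  next
    case False
    then have "is_path E (y#rest) y i" using Cons.prems p by (auto simp: is_path_cons)
    then have IH: "is_path E (y # rest @ tl q) y j \<and> path_weight c (y # rest @ tl q) = path_weight c (y#rest) * path_weight c q"
      using Cons.IH Cons.prems p by auto
    obtain z rr where rz: "rest = z#rr" using False by (cases rest) auto
    show ?thesis using IH e p rz by (simp add: is_path_cons pw_cons)
  qed
qed

lemma path_pos: "(\<And>i k. k \<in> pa E i \<Longrightarrow> c i k > 0) \<Longrightarrow> is_path E p u v \<Longrightarrow> path_weight c p > 0"
proof (induction p arbitrary: u)
  case Nil then show ?case by (simp add: is_path_def)
next
  case (Cons x xs)
  then obtain y rest where p: "x = u" "xs = y#rest" using is_path_shape by fastforce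
  have e: "c y u > 0" using Cons.prems p Cons.prems(1)[of u y] by (auto simp: is_path_cons pa_def)
  show ?case
  proof (cases "rest = []")
    case True then show ?thesis using e p by (simp add: pw_cons pw_single)
  next
    case False
    then have "is_path E (y#rest) y v" using Cons.prems p by (auto simp: is_path_cons)
    then have "path_weight c (y#rest) > 0" using Cons.IH[OF Cons.prems(1)] p by blast
    then show ?thesis using e p by (simp add: pw_cons)
  qed
qed

lemma paths_finite:
  fixes E :: "('v::finite \<times> 'v) set"
  assumes "acyclic E" shows "finite {p. is_path E p u v}"
proof (rule finite_subset)
  show "finite {xs. set xs \<subseteq> (UNIV::'v set) \<and> length xs \<le> card (UNIV::'v set)}"
    by (rule finite_lists_length_le) simp
  show "{p. is_path E p u v} \<subseteq> {xs. set xs \<subseteq> UNIV \<and> length xs \<le> card (UNIV::'v set)}"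
  proof
    fix p assume "p \<in> {p. is_path E p u v}"
    then have "distinct p" using path_distinct[OF assms] by simp
    then have "length p = card (set p)" by (simp add: distinct_card)
    also have "\<dots> \<le> card (UNIV::'v set)" by (rule card_mono) simp_all
    finally show "p \<in> {xs. set xs \<subseteq> UNIV \<and> length xs \<le> card (UNIV::'v set)}" by simp
  qed
qed



context
  fixes E :: "('v::finite \<times> 'v) set" and c :: "'v \<Rightarrow> 'v \<Rightarrow> real"
  assumes dag: "acyclic E"
    and edge_pos: "\<And>i k. k \<in> pa E i \<Longrightarrow> c i k > 0"
    and diag_pos: "\<And>i. c i i > 0"
begin

lemma no_self: "(x,x) \<notin> E\<^sup>+" using dag by (simp add: acyclic_def)

lemma ml_diag: "ml_coeff E c i i = c i i" by (simp add: ml_coeff_def)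

lemma pset_props:
  assumes "j \<in> an E i"
  shows "finite {c j j * path_weight c p | p. is_path E p j i}"
    "{c j j * path_weight c p | p. is_path E p j i} \<noteq> {}"
    "\<And>x. x \<in> {c j j * path_weight c p | p. is_path E p j i} \<Longrightarrow> x > 0"
proof -
  show "finite {c j j * path_weight c p | p. is_path E p j i}"
    using paths_finite[OF dag] by (rule finite_image_set)
  show "{c j j * path_weight c p | p. is_path E p j i} \<noteq> {}"
  proof -
    have "(j,i) \<in> E\<^sup>+" using assms by (simp add: an_def)
    from path_exists[OF this] obtain p where "is_path E p j i" by (elim exE)
    then have "c j j * path_weight c p \<in> {c j j * path_weight c p | p. is_path E p j i}" by auto
    then show ?thesis by (intro notI) simp
  qed
  fix x assume "x \<in> {c j j * path_weight c p | p. is_path E p j i}"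
  then obtain p where "is_path E p j i" "x = c j j * path_weight c p" by blast
  moreover have "path_weight c p > 0" 
    apply (rule path_pos[where E=E and c=c])
     apply (erule edge_pos)
    apply fact
    done
  ultimately show "x > 0" using diag_pos[of j] by simp
qed

lemma ml_an_pos:
  assumes "j \<in> an E i" "i \<noteq> j"
  shows "ml_coeff E c i j > 0 \<and> (\<exists>p. is_path E p j i \<and> ml_coeff E c i j = c j j * path_weight c p)"
proof -
  have eq: "ml_coeff E c i j = Max {c j j * path_weight c p | p. is_path E p j i}"
    using assms by (simp add: ml_coeff_def)
  have "Max {c j j * path_weight c p | p. is_path E p j i} \<in> {c j j * path_weight c p | p. is_path E p j i}"
    using pset_props[OF assms(1)] by (intro Max_in) auto
  then show ?thesis using eq pset_props(3)[OF assms(1)] by auto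
qed

lemma ml_ge:
  assumes "is_path E p j i" "i \<noteq> j"
  shows "ml_coeff E c i j \<ge> c j j * path_weight c p"
proof -
  have an: "j \<in> an E i" using path_trancl[OF assms(1)] by (simp add: an_def)
  have eq: "ml_coeff E c i j = Max {c j j * path_weight c p | p. is_path E p j i}"
    using assms an by (simp add: ml_coeff_def)
  show ?thesis unfolding eq using pset_props(1)[OF an] assms(1) by (intro Max_ge) auto
qed

lemma ml_nonneg: "ml_coeff E c i j \<ge> 0"
proof (cases "i = j")
  case True then show ?thesis using diag_pos[of i] by (simp add: ml_coeff_def)
next
  case False
  show ?thesis
  proof (cases "j \<in> an E i")
    case True then show ?thesis using ml_an_pos[OF True False] by simp
  next
    case False2: False then show ?thesis using False by (simp add: ml_coeff_def)
  qed
qed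

lemma ml_zero: "j \<noteq> i \<Longrightarrow> j \<notin> an E i \<Longrightarrow> ml_coeff E c i j = 0"
  by (simp add: ml_coeff_def)

lemma ml_key:
  assumes ij: "(i,j) \<in> E\<^sup>+"
  shows "ml_coeff E c j k \<ge> (ml_coeff E c j i / c i i) * ml_coeff E c i k"
proof -
  have ineq: "i \<noteq> j" using ij no_self by auto
  obtain q where q: "is_path E q i j" "ml_coeff E c j i = c i i * path_weight c q"
    using ml_an_pos[of i j] ij ineq by (auto simp: an_def)
  have cii: "c i i > 0" by (rule diag_pos)
  show ?thesis
  proof (cases "k = i")
    case True then show ?thesis using cii by (simp add: ml_diag)
  next
    case ki: False
    show ?thesis
    proof (cases "k \<in> an E i")
      case True
      obtain p where p: "is_path E p k i" "ml_coeff E c i k = c k k * path_weight c p"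
        using ml_an_pos[OF True] ki by auto
      have kj: "k \<noteq> j"
      proof
        assume "k = j"
        then have "(j,i) \<in> E\<^sup>+" using True by (simp add: an_def)
        then show False using ij no_self by (meson trancl_trans)
      qed
      have pa: "is_path E (p @ tl q) k j \<and> path_weight c (p @ tl q) = path_weight c p * path_weight c q"
        using path_append[OF p(1) q(1)] by blast
      have "ml_coeff E c j k \<ge> c k k * path_weight c (p @ tl q)"
        using ml_ge[of "p @ tl q" k j] pa kj by auto
      moreover have "(ml_coeff E c j i / c i i) * ml_coeff E c i k = c k k * path_weight c (p @ tl q)"
        using pa p(2) q(2) cii by (simp add: field_simps)
      ultimately show ?thesis by simp
    next
      case False
      then have "ml_coeff E c i k = 0" using ki by (intro ml_zero) auto
      then show ?thesis using ml_nonneg by simp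
    qed
  qed
qed

end


lemma Max_wM:
  fixes A :: "'v::finite \<Rightarrow> 'v \<Rightarrow> real"
  assumes ij: "i \<noteq> j"
  shows "Max (range (\<lambda>l. (wM i a j l)\<^sup>2 * (A l k)\<^sup>2)) = max ((A i k)\<^sup>2) (a\<^sup>2 * (A j k)\<^sup>2)"
proof (rule Max_eqI)
  have wi: "wM i a j i = 1" by (simp add: wM_def)
  have wj: "wM i a j j = a" using ij by (simp add: wM_def)
  have wo: "wM i a j l = 0" if "l \<noteq> i" "l \<noteq> j" for l using that by (simp add: wM_def)
  show "finite (range (\<lambda>l. (wM i a j l)\<^sup>2 * (A l k)\<^sup>2))" by simp
  show "y \<le> max ((A i k)\<^sup>2) (a\<^sup>2 * (A j k)\<^sup>2)" if ym: "y \<in> range (\<lambda>l. (wM i a j l)\<^sup>2 * (A l k)\<^sup>2)" for y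
  proof -
    obtain l where y: "y = (wM i a j l)\<^sup>2 * (A l k)\<^sup>2" using ym by blast
    consider "l = i" | "l = j" | "l \<noteq> i" "l \<noteq> j" by blast
    then show ?thesis
    proof cases
      case 1 then show ?thesis using y wi by simp
    next
      case 2 then show ?thesis using y wj by (simp add: power_mult_distrib)
    next
      case 3 then have "y = 0" using y wo by simp
      then show ?thesis by (simp add: le_max_iff_disj)
    qed
  qed
  show "max ((A i k)\<^sup>2) (a\<^sup>2 * (A j k)\<^sup>2) \<in> range (\<lambda>l. (wM i a j l)\<^sup>2 * (A l k)\<^sup>2)"
  proof (cases "(A i k)\<^sup>2 \<le> a\<^sup>2 * (A j k)\<^sup>2")
    case True
    have "max ((A i k)\<^sup>2) (a\<^sup>2 * (A j k)\<^sup>2) = (wM i a j j)\<^sup>2 * (A j k)\<^sup>2"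
      using True wj by (simp add: max_absorb2 power_mult_distrib)
    then show ?thesis by (rule image_eqI) simp
  next
    case False
    have "max ((A i k)\<^sup>2) (a\<^sup>2 * (A j k)\<^sup>2) = (wM i a j i)\<^sup>2 * (A i k)\<^sup>2"
      using False wi by (simp add: max_absorb1)
    then show ?thesis by (rule image_eqI) simp
  qed
qed
lemma Max_wX:
  fixes A :: "'v::finite \<Rightarrow> 'v \<Rightarrow> real"
  shows "Max (range (\<lambda>l. (wX i l)\<^sup>2 * (A l k)\<^sup>2)) = (A i k)\<^sup>2"
proof (rule Max_eqI)
  show "finite (range (\<lambda>l. (wX i l)\<^sup>2 * (A l k)\<^sup>2))" by simp
  show "y \<le> (A i k)\<^sup>2" if ym: "y \<in> range (\<lambda>l. (wX i l)\<^sup>2 * (A l k)\<^sup>2)" for y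
  proof -
    obtain l where y: "y = (wX i l)\<^sup>2 * (A l k)\<^sup>2" using ym by blast
    then show ?thesis by (cases "l = i") (simp_all add: wX_def)
  qed
  have "(A i k)\<^sup>2 = (wX i i)\<^sup>2 * (A i k)\<^sup>2" by (simp add: wX_def)
  then show "(A i k)\<^sup>2 \<in> range (\<lambda>l. (wX i l)\<^sup>2 * (A l k)\<^sup>2)" by (rule image_eqI) simp
qed
lemma sigma2_eq:
  fixes A :: "'v::finite \<Rightarrow> 'v \<Rightarrow> real"
  assumes "\<And>k. col_norm A k > 0"
  shows "sigma2 A b = (\<Sum>k\<in>UNIV. Max (range (\<lambda>l. (b l)\<^sup>2 * (A l k)\<^sup>2)))"
  unfolding sigma2_def ang_integral_def
proof (rule sum.cong[OF refl])
  fix k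
  define n where "n = col_norm A k"
  have n: "n > 0" using assms n_def by simp
  have "range (\<lambda>l. (b l)\<^sup>2 * (A l k / n)\<^sup>2) = (\<lambda>x. x / n\<^sup>2) ` range (\<lambda>l. (b l)\<^sup>2 * (A l k)\<^sup>2)"
    by (auto simp: power_divide image_iff)
  moreover have "Max ((\<lambda>x. x / n\<^sup>2) ` range (\<lambda>l. (b l)\<^sup>2 * (A l k)\<^sup>2)) = Max (range (\<lambda>l. (b l)\<^sup>2 * (A l k)\<^sup>2)) / n\<^sup>2"
    by (rule mono_Max_commute[symmetric]) (auto simp: mono_def n divide_right_mono)
  ultimately show "(col_norm A k)\<^sup>2 * Max (range (\<lambda>i. (b i)\<^sup>2 * (\<lambda>i. A i k / col_norm A k) i ^ 2))
        = Max (range (\<lambda>l. (b l)\<^sup>2 * (A l k)\<^sup>2))"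
    using n by (simp add: n_def[symmetric])
qed




context
  fixes E :: "('v::finite \<times> 'v) set" and c :: "'v \<Rightarrow> 'v \<Rightarrow> real"
  assumes dag: "acyclic E"
    and edge_pos: "\<And>i k. k \<in> pa E i \<Longrightarrow> c i k > 0"
    and diag_pos: "\<And>i. c i i > 0"
begin

lemma mld: "ml_coeff E c i i = c i i" by (simp add: ml_coeff_def)

lemma mlnn: "ml_coeff E c i j \<ge> 0"
  by (rule ml_nonneg[where E=E and c=c, OF dag edge_pos diag_pos])

lemma S_ge: "(ml_coeff E c i k)\<^sup>2 \<le> (\<Sum>l\<in>UNIV. (ml_coeff E c i l)\<^sup>2)"
  by (rule member_le_sum) auto

lemma S_pos: "(\<Sum>l\<in>UNIV. (ml_coeff E c i l)\<^sup>2) > 0"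
proof -
  have "(ml_coeff E c i i)\<^sup>2 > 0" using diag_pos[of i] mld[of i] by simp
  then show ?thesis using S_ge[of i i] by linarith
qed

lemma std_nonneg: "std_coeff E c i k \<ge> 0"
  unfolding std_coeff_def by (intro divide_nonneg_nonneg mlnn) (simp add: sum_nonneg)

lemma std_row: "(\<Sum>k\<in>UNIV. (std_coeff E c i k)\<^sup>2) = 1"
proof -
  define S where "S = (\<Sum>l\<in>UNIV. (ml_coeff E c i l)\<^sup>2)"
  have S: "S > 0" using S_pos S_def by simp
  have "(\<Sum>k\<in>UNIV. (std_coeff E c i k)\<^sup>2) = (\<Sum>k\<in>UNIV. (ml_coeff E c i k)\<^sup>2 / S)"
    unfolding std_coeff_def S_def[symmetric] using S by (simp add: power_divide)
  also have "\<dots> = S / S" unfolding S_def by (rule sum_divide_distrib[symmetric])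
  finally show ?thesis using S by simp
qed

lemma std_diag_pos: "std_coeff E c i i > 0"
  unfolding std_coeff_def using S_pos[of i] diag_pos[of i] by (simp add: mld)

lemma col_pos: "col_norm (std_coeff E c) k > 0"
proof -
  have "(std_coeff E c k k)\<^sup>2 \<le> (\<Sum>i\<in>UNIV. (std_coeff E c i k)\<^sup>2)"
    by (rule member_le_sum) auto
  moreover have "(std_coeff E c k k)\<^sup>2 > 0" using std_diag_pos[of k] by simp
  ultimately have "(\<Sum>i\<in>UNIV. (std_coeff E c i k)\<^sup>2) > 0" by linarith
  then show ?thesis unfolding col_norm_def by simp
qed

lemma std_source:
  assumes "pa E j = {}"
  shows "std_coeff E c j k = (if k = j then 1 else 0)"
proof -
  have an: "an E j = {}"
  proof (rule ccontr)
    assume "an E j \<noteq> {}"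
    then obtain k where "(k,j) \<in> E\<^sup>+" by (auto simp: an_def)
    then obtain k' where "(k',j) \<in> E" by (rule tranclE) auto
    then show False using assms by (auto simp: pa_def)
  qed
  have ml: "ml_coeff E c j l = (if l = j then c j j else 0)" for l
    using an by (simp add: ml_coeff_def)
  have "(\<Sum>l\<in>UNIV. (ml_coeff E c j l)\<^sup>2) = (\<Sum>l\<in>UNIV. if l = j then (c j j)\<^sup>2 else 0)"
    by (rule sum.cong) (auto simp: ml)
  also have "\<dots> = (c j j)\<^sup>2" by simp
  finally have S: "(\<Sum>l\<in>UNIV. (ml_coeff E c j l)\<^sup>2) = (c j j)\<^sup>2" .
  show ?thesis unfolding std_coeff_def S using diag_pos[of j] by (simp add: ml)
qed

lemma std_strict:
  assumes ij: "(i,j) \<in> E\<^sup>+"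
  shows "0 < std_coeff E c j i \<and> std_coeff E c j i < std_coeff E c i i"
proof -
  have noself: "\<And>x. (x,x) \<notin> E\<^sup>+" using dag by (simp add: acyclic_def)
  have ineq: "j \<noteq> i" using ij noself by auto
  define Si where "Si = (\<Sum>l\<in>UNIV. (ml_coeff E c i l)\<^sup>2)"
  define Sj where "Sj = (\<Sum>l\<in>UNIV. (ml_coeff E c j l)\<^sup>2)"
  have Si: "Si > 0" unfolding Si_def by (rule S_pos)
  have Sj: "Sj > 0" unfolding Sj_def by (rule S_pos)
  have mji: "ml_coeff E c j i > 0"
    using ml_an_pos[where E=E and c=c, OF dag edge_pos diag_pos, where j=i and i=j] ij ineq by (auto simp: an_def)
  define r where "r = ml_coeff E c j i / c i i"
  have cii: "c i i > 0" by (rule diag_pos)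
  have r: "r > 0" unfolding r_def using mji cii by simp
  have key: "r * ml_coeff E c i k \<le> ml_coeff E c j k" for k
    using ml_key[where E=E and c=c, OF dag edge_pos diag_pos ij, where k=k] unfolding r_def by simp
  have mij: "ml_coeff E c i j = 0"
  proof (rule ml_zero[where E=E and c=c, OF dag edge_pos diag_pos])
    show "j \<noteq> i" by fact
    show "j \<notin> an E i"
    proof
      assume "j \<in> an E i"
      then have "(j,i) \<in> E\<^sup>+" by (simp add: an_def)
      then show False using ij noself by (meson trancl_trans)
    qed
  qed
  have "(\<Sum>k\<in>UNIV. (r * ml_coeff E c i k)\<^sup>2) < (\<Sum>k\<in>UNIV. (ml_coeff E c j k)\<^sup>2)"
  proof (rule sum_strict_mono_ex1)
    show "\<forall>k\<in>UNIV. (r * ml_coeff E c i k)\<^sup>2 \<le> (ml_coeff E c j k)\<^sup>2"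
    proof
      fix k
      have nn: "0 \<le> r * ml_coeff E c i k" using r mlnn by simp
      show "(r * ml_coeff E c i k)\<^sup>2 \<le> (ml_coeff E c j k)\<^sup>2" by (rule power_mono[OF key nn])
    qed
    show "\<exists>k\<in>UNIV. (r * ml_coeff E c i k)\<^sup>2 < (ml_coeff E c j k)\<^sup>2"
      using mij diag_pos[of j] by (intro bexI[of _ j]) (simp_all add: mld)
  qed simp
  moreover have "(\<Sum>k\<in>UNIV. (r * ml_coeff E c i k)\<^sup>2) = r\<^sup>2 * Si"
    unfolding Si_def by (simp add: power_mult_distrib sum_distrib_left)
  ultimately have lt: "r\<^sup>2 * Si < Sj" unfolding Sj_def by simp
  have "sqrt (r\<^sup>2 * Si) < sqrt Sj" using lt by (rule real_sqrt_less_mono)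
  then have lt2: "r * sqrt Si < sqrt Sj" using r by (simp add: real_sqrt_mult)
  have sji: "std_coeff E c j i = r * c i i / sqrt Sj"
    unfolding std_coeff_def Sj_def[symmetric] r_def using cii by simp
  have sii: "std_coeff E c i i = c i i / sqrt Si"
    unfolding std_coeff_def Si_def[symmetric] by (simp add: mld)
  have pos: "0 < std_coeff E c j i" unfolding sji using r cii Sj by simp
  have "r * c i i / sqrt Sj < c i i / sqrt Si"
  proof -
    have "r * c i i * sqrt Si < c i i * sqrt Sj" using lt2 cii
      by (simp add: mult.commute mult.left_commute)
    then show ?thesis using Si Sj by (simp add: field_simps)
  qed
  then show ?thesis using pos sji sii by simp
qed

end



lemma term_le:
  fixes b x y :: real assumes "b > 1" "0 \<le> x" "0 \<le> y"
  shows "max x (b*y) - max x y \<le> (b-1)*y"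
proof -
  have "y \<le> b*y" using assms mult_right_mono[of 1 b y] by simp
  then show ?thesis by (simp add: max_def algebra_simps)
qed

lemma term_lt:
  fixes b x y :: real assumes "b > 1" "0 < y" "y < x"
  shows "max x (b*y) - max x y < (b-1)*y"
proof -
  have "0 < (b-1)*y" using assms by simp
  then show ?thesis using assms by (simp add: max_def algebra_simps)
qed

lemma term_eq:
  fixes b x y :: real assumes "b > 1" "0 \<le> y" "x \<le> y"
  shows "max x (b*y) - max x y = (b-1)*y"
proof -
  have "y \<le> b*y" using assms mult_right_mono[of 1 b y] by simp
  then show ?thesis using assms by (simp add: max_def algebra_simps)
qed

theorem theorem4p2:
  fixes E :: "('v::finite \<times> 'v) set" and c :: "'v \<Rightarrow> 'v \<Rightarrow> real"
    and a :: real and j :: 'v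
  assumes dag: "acyclic E"
    and edge_pos: "\<And>i k. k \<in> pa E i \<Longrightarrow> c i k > 0"
    and diag_pos: "\<And>i. c i i > 0"
    and a_gt: "a > 1"
  defines "A \<equiv> std_coeff E c"
  shows "(pa E j = {} \<longleftrightarrow>
            (\<forall>i. i \<noteq> j \<longrightarrow>
               sigma2 A (wM i a j) - sigma2 A (wM i 1 j) = (a\<^sup>2 - 1) * sigma2 A (wX i) \<and>
               (a\<^sup>2 - 1) * sigma2 A (wX i) = a\<^sup>2 - 1))
       \<and> (pa E j \<noteq> {} \<longrightarrow>
            (\<forall>i. i \<noteq> j \<longrightarrow> sigma2 A (wM i a j) - sigma2 A (wM i 1 j) \<le> a\<^sup>2 - 1) \<and>
            (\<forall>i \<in> an E j. i \<noteq> j \<longrightarrow> sigma2 A (wM i a j) - sigma2 A (wM i 1 j) < a\<^sup>2 - 1))"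
proof -
  note colp = col_pos[where E=E and c=c, OF dag edge_pos diag_pos]
  note row = std_row[where E=E and c=c, OF dag edge_pos diag_pos]
  note nn = std_nonneg[where E=E and c=c, OF dag edge_pos diag_pos]
  note src = std_source[where E=E and c=c, OF dag edge_pos diag_pos]
  note strict = std_strict[where E=E and c=c, OF dag edge_pos diag_pos]
  have colA: "\<And>k. col_norm A k > 0" unfolding A_def by (rule colp)
  have rowA: "\<And>i. (\<Sum>k\<in>UNIV. (A i k)\<^sup>2) = 1" unfolding A_def by (rule row)
  have nnA: "\<And>i k. A i k \<ge> 0" unfolding A_def by (rule nn)
  have b: "a\<^sup>2 > 1" using a_gt by (simp add: one_less_power)
  have sX: "sigma2 A (wX i) = 1" for i
    unfolding sigma2_eq[OF colA] Max_wX by (rule rowA)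
  have diff: "sigma2 A (wM i a j) - sigma2 A (wM i 1 j)
      = (\<Sum>k\<in>UNIV. max ((A i k)\<^sup>2) (a\<^sup>2 * (A j k)\<^sup>2) - max ((A i k)\<^sup>2) ((A j k)\<^sup>2))" if ij: "i \<noteq> j" for i
    unfolding sigma2_eq[OF colA] Max_wM[OF ij] by (simp add: sum_subtractf)
  have le: "sigma2 A (wM i a j) - sigma2 A (wM i 1 j) \<le> a\<^sup>2 - 1" if ij: "i \<noteq> j" for i
  proof -
    have "(\<Sum>k\<in>UNIV. max ((A i k)\<^sup>2) (a\<^sup>2 * (A j k)\<^sup>2) - max ((A i k)\<^sup>2) ((A j k)\<^sup>2))
        \<le> (\<Sum>k\<in>UNIV. (a\<^sup>2 - 1) * (A j k)\<^sup>2)"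
      by (rule sum_mono) (rule term_le[OF b]; simp)
    also have "\<dots> = a\<^sup>2 - 1" by (simp add: sum_distrib_left[symmetric] rowA)
    finally show ?thesis using diff[OF ij] by simp
  qed
  have lt: "sigma2 A (wM i a j) - sigma2 A (wM i 1 j) < a\<^sup>2 - 1" if ia: "i \<in> an E j" for i
  proof -
    have ijE: "(i,j) \<in> E\<^sup>+" using ia by (simp add: an_def)
    have ij: "i \<noteq> j" using ijE dag by (auto simp: acyclic_def)
    have s: "0 < A j i \<and> A j i < A i i" unfolding A_def using strict[OF _ ijE] by blast
    have sq: "(A j i)\<^sup>2 < (A i i)\<^sup>2" using s by (intro power_strict_mono) auto
    have "(\<Sum>k\<in>UNIV. max ((A i k)\<^sup>2) (a\<^sup>2 * (A j k)\<^sup>2) - max ((A i k)\<^sup>2) ((A j k)\<^sup>2))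
        < (\<Sum>k\<in>UNIV. (a\<^sup>2 - 1) * (A j k)\<^sup>2)"
    proof (rule sum_strict_mono_ex1)
      show "\<forall>k\<in>UNIV. max ((A i k)\<^sup>2) (a\<^sup>2 * (A j k)\<^sup>2) - max ((A i k)\<^sup>2) ((A j k)\<^sup>2) \<le> (a\<^sup>2 - 1) * (A j k)\<^sup>2"
        by (intro ballI term_le[OF b]) simp_all
      show "\<exists>k\<in>UNIV. max ((A i k)\<^sup>2) (a\<^sup>2 * (A j k)\<^sup>2) - max ((A i k)\<^sup>2) ((A j k)\<^sup>2) < (a\<^sup>2 - 1) * (A j k)\<^sup>2"
        using term_lt[OF b _ sq] s by (intro bexI[of _ i]) simp_all
    qed simp
    also have "\<dots> = a\<^sup>2 - 1" by (simp add: sum_distrib_left[symmetric] rowA)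
    finally show ?thesis using diff[OF ij] by simp
  qed
  have source: "sigma2 A (wM i a j) - sigma2 A (wM i 1 j) = a\<^sup>2 - 1" if pj: "pa E j = {}" and ij: "i \<noteq> j" for i
  proof -
    have Aj: "A j k = (if k = j then 1 else 0)" for k unfolding A_def using src[OF _ pj] by blast
    have xle: "(A i j)\<^sup>2 \<le> 1"
    proof -
      have "(A i j)\<^sup>2 \<le> (\<Sum>k\<in>UNIV. (A i k)\<^sup>2)" by (rule member_le_sum) auto
      then show ?thesis using rowA[of i] by simp
    qed
    have "(\<Sum>k\<in>UNIV. max ((A i k)\<^sup>2) (a\<^sup>2 * (A j k)\<^sup>2) - max ((A i k)\<^sup>2) ((A j k)\<^sup>2))
        = (\<Sum>k\<in>UNIV. (a\<^sup>2 - 1) * (A j k)\<^sup>2)"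
    proof (rule sum.cong[OF refl])
      fix k
      show "max ((A i k)\<^sup>2) (a\<^sup>2 * (A j k)\<^sup>2) - max ((A i k)\<^sup>2) ((A j k)\<^sup>2) = (a\<^sup>2 - 1) * (A j k)\<^sup>2"
      proof (cases "k = j")
        case True
        then show ?thesis using term_eq[OF b, of 1 "(A i j)\<^sup>2"] xle Aj[of j] by simp
      next
        case False
        then show ?thesis using Aj[of k] by simp
      qed
    qed
    also have "\<dots> = a\<^sup>2 - 1" by (simp add: sum_distrib_left[symmetric] rowA)
    finally show ?thesis using diff[OF ij] by simp
  qed
  have notsrc: "pa E j \<noteq> {} \<Longrightarrow> \<exists>i. i \<noteq> j \<and> sigma2 A (wM i a j) - sigma2 A (wM i 1 j) < a\<^sup>2 - 1"
  proof -
    assume "pa E j \<noteq> {}"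
    then obtain i where "(i,j) \<in> E" by (auto simp: pa_def)
    then have ia: "i \<in> an E j" by (auto simp: an_def)
    then have "i \<noteq> j" using dag by (auto simp: an_def acyclic_def)
    then show ?thesis using lt[OF ia] by blast
  qed
  show ?thesis
  proof (intro conjI impI allI ballI iffI)
    fix i assume "pa E j = {}" "i \<noteq> j"
    then show "sigma2 A (wM i a j) - sigma2 A (wM i 1 j) = (a\<^sup>2 - 1) * sigma2 A (wX i)"
      using source sX by simp
  next
    fix i show "(a\<^sup>2 - 1) * sigma2 A (wX i) = a\<^sup>2 - 1" using sX by simp
  next
    assume H: "\<forall>i. i \<noteq> j \<longrightarrow> sigma2 A (wM i a j) - sigma2 A (wM i 1 j) = (a\<^sup>2 - 1) * sigma2 A (wX i) \<and>
               (a\<^sup>2 - 1) * sigma2 A (wX i) = a\<^sup>2 - 1"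
    show "pa E j = {}"
    proof (rule ccontr)
      assume "pa E j \<noteq> {}"
      then obtain i where "i \<noteq> j" "sigma2 A (wM i a j) - sigma2 A (wM i 1 j) < a\<^sup>2 - 1" using notsrc by blast
      then show False using H sX by auto
    qed
  next
    fix i assume "i \<noteq> j" then show "sigma2 A (wM i a j) - sigma2 A (wM i 1 j) \<le> a\<^sup>2 - 1" by (rule le)
  next
    fix i assume "i \<in> an E j" "i \<noteq> j" then show "sigma2 A (wM i a j) - sigma2 A (wM i 1 j) < a\<^sup>2 - 1" using lt by blast
  qed
qed



end
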